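(* Let $r\in\mathbb{N}$. 1) Let $(v_n)_{n\ge1}$ be a sequence of vertices of $\mathbb{YF}^r$, let $v\in\mathbb{YF}^{r,+}_\infty$ and $\beta\in(0,1]$ be such that $v_n\to v$ letterwise and $\pi(v_n)\to\beta\cdot\pi(v)$ as $n\to\infty$. Then for every $w\in\mathbb{YF}^r$ the limit $$\mu_{\{v_n\}}(w)=\lim_{n\to\infty} d_r(\varepsilon,w)\,\frac{d_r(w,v_n)}{d_r(\varepsilon,v_n)}$$ exists. Moreover, its value depends only on $w$, $v$ and $\beta$: any two sequences satisfying these hypotheses with the same $v$ and $\beta$ give the same limit. 2) Let $(v_n)_{n\ge1}$ be a sequence of vertices of $\mathbb{YF}^r$ and let $v\in\mathbb{YF}^r_\infty$ be such that $v_n\to v$ letterwise and $\pi(v_n)\to 0$. Then for every $w\in\mathbb{YF}^r$ the limit exists and $$\lim_{n\to\infty} d_r(\varepsilon,w)\,\frac{d_r(w,v_n)}{d_r(\varepsilon,v_n)}=\frac{d_1(\varepsilon,s(w))^2}{|w|!\cdot r^{e(w)}}.$$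
   Context: Fix $r\in\mathbb{N}=\{1,2,\dots\}$. Words and statistics. Consider finite words over the $(r+1)$-letter alphabet $\{1_1,\dots,1_r,2\}$. A letter $1_i$ is called a one and has digit value $1$; the letter $2$ is a two and has digit value $2$. Words are written left to right, and $\varepsilon$ is the empty word. For a word $x$: - $|x|$ is the sum of the digit values, - $\#x$ is the number of letters, - $e(x)$ is the number of ones, - $d(x)$ is the number of twos. The graph $\mathbb{YF}^r$. It is the graded graph whose vertices are all such finite words, graded by $|\cdot|$. From a word $x$ there is a downward edge to every word obtained from $x$ by one of two operations: (i) delete the leftmost one of $x$; (ii) replace a letter $2$ lying to the left of the leftmost one of $x$ (any $2$ if $x$ has no ones) by a letter $1_i$, with arbitrary $i\in\{1,\dots,r\}$. For $r=1$ we write $1$ for $1_1$; $\mathbb{YF}:=\mathbb{YF}^1$ is the Young–Fibonacci graph. For $x\in\mathbb{YF}^r$, $s(x)\in\mathbb{YF}$ is obtained by replacing every $1_i$ by $1$. Path counts. For vertices $x,y$, $d_r(x,y)$ is the number of downward paths $y=y_n\to y_{n-1}\to\dots\to y_m=x$ along edges of $\mathbb{YF}^r$ with $|y_i|=i$. In particular $d_r(x,x)=1$, and $d_r(x,y)=0$ if there is no such path. $d_1$ denotes the same count in $\mathbb{YF}$. Infinite words. $\mathbb{YF}^r_\infty$ is the set of left-infinite words $\dots\alpha_2\alpha_1$ over the same alphabet. The function $g$. For a finite or infinite word $x$, write $x=\dots 2\,1^{\beta_m}\,2\cdots 2\,1^{\beta_1}\,2\,1^{\beta_0}$, where $1^{\beta}$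 is a possibly empty block of $\beta$ consecutive ones with arbitrary indices. For $1\le j\le d(x)$ set $g(x,j)=\beta_0+\dots+\beta_{j-1}+2j-1$. The function $\pi$. Set $\pi(x)=\prod_{j:\,g(x,j)>1}\frac{g(x,j)-1}{g(x,j)}$; for infinite $x$ this is an infinite product with value in $[0,1]$. Let $\mathbb{YF}^{r,+}_\infty=\{v\in\mathbb{YF}^r_\infty:\pi(v)>0\}$. Letterwise convergence. A sequence of finite words $v_n$ converges letterwise to $v=\dots\alpha_2\alpha_1\in\mathbb{YF}^r_\infty$ if for every $k$ and all sufficiently large $n$, $v_n$ has at least $k$ letters and its last $k$ letters are $\alpha_k\dots\alpha_1$. *)

theory Defs
  imports Complex_Main
begin

text \<open>Letters: One i stands for the one 1_i (only 1 \<le> i \<le> r is allowed), Two for the letter 2.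
  Finite words are lists written left to right.\<close>
datatype letter = One nat | Two

type_synonym word = "letter list"

definition letter_ok :: "nat \<Rightarrow> letter \<Rightarrow> bool" where
  "letter_ok r l = (case l of One i \<Rightarrow> 1 \<le> i \<and> i \<le> r | Two \<Rightarrow> True)"

definition vertex :: "nat \<Rightarrow> word \<Rightarrow> bool" where
  "vertex r x = (\<forall>l\<in>set x. letter_ok r l)"

definition digit :: "letter \<Rightarrow> nat" where
  "digit l = (case l of One _ \<Rightarrow> 1 | Two \<Rightarrow> 2)"

definition wt :: "word \<Rightarrow> nat" where
  "wt x = sum_list (map digit x)"

definition ones :: "word \<Rightarrow> nat" where
  "ones x = length (filter (\<lambda>l. l \<noteq> Two) x)"

definition sfun :: "word \<Rightarrow> word" where
  "sfun x = map (\<lambda>l. case l of One _ \<Rightarrow> One 1 | Two \<Rightarrow> Two) x"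

text \<open>Position of the leftmost one (= length x if there is no one).\<close>
definition lpos :: "word \<Rightarrow> nat" where
  "lpos x = length (takeWhile (\<lambda>l. l = Two) x)"

text \<open>Downward edge from x to z in YF^r: (i) delete the leftmost one; (ii) replace a 2 to the
  left of the leftmost one (any 2 if there are no ones) by some 1_i with 1 \<le> i \<le> r.\<close>
definition edge :: "nat \<Rightarrow> word \<Rightarrow> word \<Rightarrow> bool" where
  "edge r x z =
     ((lpos x < length x \<and> z = take (lpos x) x @ drop (Suc (lpos x)) x)
      \<or> (\<exists>j < lpos x. \<exists>i. 1 \<le> i \<and> i \<le> r \<and> z = x[j := One i]))"

definition dpaths :: "nat \<Rightarrow> word \<Rightarrow> word \<Rightarrow> word list set" where
  "dpaths r x y = {ps. ps \<noteq> [] \<and> hd ps = y \<and> last ps = x \<and>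
      (\<forall>i. Suc i < length ps \<longrightarrow> edge r (ps ! i) (ps ! Suc i))}"

text \<open>d_r(x,y): number of downward paths from y to x.\<close>
definition dcount :: "nat \<Rightarrow> word \<Rightarrow> word \<Rightarrow> nat" where
  "dcount r x y = card (dpaths r x y)"

text \<open>Infinite words ...\<alpha>_2 \<alpha>_1 are functions; a k = \<alpha>_(k+1), i.e. position k counted from
  the right starting at 0.\<close>
type_synonym iword = "nat \<Rightarrow> letter"

definition ivertex :: "nat \<Rightarrow> iword \<Rightarrow> bool" where
  "ivertex r a = (\<forall>k. letter_ok r (a k))"

definition rix :: "word \<Rightarrow> iword" where
  "rix x = (\<lambda>k. if k < length x then rev x ! k else Two)"

text \<open>If position k holds the j-th two from the right, then
  g(x,j) = \<beta>_0 + ... + \<beta>_(j-1) + 2j - 1 = (sum of digits at positions 0..k) - 1.\<close>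
definition gval :: "iword \<Rightarrow> nat \<Rightarrow> nat" where
  "gval a k = (\<Sum>m\<le>k. digit (a m)) - 1"

definition pfac :: "iword \<Rightarrow> nat \<Rightarrow> real" where
  "pfac a k = (if a k = Two \<and> gval a k > 1
               then (real (gval a k) - 1) / real (gval a k) else 1)"

definition pi_fin :: "word \<Rightarrow> real" where
  "pi_fin x = (\<Prod>k<length x. pfac (rix x) k)"

text \<open>Infinite product, as the limit of the (non-increasing, nonnegative) partial products.\<close>
definition pi_inf :: "iword \<Rightarrow> real" where
  "pi_inf a = lim (\<lambda>N. \<Prod>k<N. pfac a k)"

definition letterwise :: "(nat \<Rightarrow> word) \<Rightarrow> iword \<Rightarrow> bool" where
  "letterwise vs a = (\<forall>k. \<forall>\<^sub>F n in sequentially.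
      k \<le> length (vs n) \<and> (\<forall>m<k. rev (vs n) ! m = a m))"

definition ratio :: "nat \<Rightarrow> word \<Rightarrow> word \<Rightarrow> real" where
  "ratio r w v = real (dcount r [] w) * real (dcount r w v) / real (dcount r [] v)"

end

theory Submission
  imports Defs
begin


fun cov :: "nat \<Rightarrow> word \<Rightarrow> word set" where
  "cov r [] = {}"
| "cov r (One i # u) = {u}"
| "cov r (Two # u) = (\<lambda>j. One j # u) ` {1..r} \<union> (Cons Two) ` cov r u"

lemma wt_simps[simp]: "wt [] = 0" "wt (One i # u) = Suc (wt u)" "wt (Two # u) = Suc (Suc (wt u))"
  by (auto simp: wt_def digit_def)

lemma lpos_simps[simp]: "lpos [] = 0" "lpos (One i # u) = 0" "lpos (Two # u) = Suc (lpos u)"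
  by (auto simp: lpos_def)

lemma edge_Nil: "\<not> edge r [] y" by (simp add: edge_def)

lemma edge_One: "edge r (One i # u) y \<longleftrightarrow> y = u" by (simp add: edge_def)

lemma edge_Two: "edge r (Two # u) y \<longleftrightarrow>
   (\<exists>i. 1 \<le> i \<and> i \<le> r \<and> y = One i # u) \<or> (\<exists>y'. y = Two # y' \<and> edge r u y')"
proof
  assume "edge r (Two # u) y"
  then show "(\<exists>i. 1 \<le> i \<and> i \<le> r \<and> y = One i # u) \<or> (\<exists>y'. y = Two # y' \<and> edge r u y')"
    unfolding edge_def by (auto simp: less_Suc_eq_0_disj; blast)
next
  assume "(\<exists>i. 1 \<le> i \<and> i \<le> r \<and> y = One i # u) \<or> (\<exists>y'. y = Two # y' \<and> edge r u y')"
  then consider (a) i where "1 \<le> i" "i \<le> r" "y = One i # u"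
    | (b) y' where "y = Two # y'" "edge r u y'" by blast
  then show "edge r (Two # u) y"
  proof cases
    case a then show ?thesis unfolding edge_def by (metis lpos_simps(3) zero_less_Suc list_update_code(2))
  next
    case b
    from b(2) consider (i) "lpos u < length u" "y' = take (lpos u) u @ drop (Suc (lpos u)) u"
      | (ii) j i where "j < lpos u" "1 \<le> i" "i \<le> r" "y' = u[j := One i]"
      unfolding edge_def by blast
    then show ?thesis
    proof cases
      case i then show ?thesis using b(1) unfolding edge_def by auto
    next
      case ii then show ?thesis using b(1) unfolding edge_def
        by (metis Suc_less_eq list_update_code(3) lpos_simps(3))
    qed
  qed
qed

lemma edge_cov: "edge r x y \<longleftrightarrow> y \<in> cov r x"
proof (induction x arbitrary: y)
  case Nil then show ?case by (simp add: edge_Nil)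
next
  case (Cons a u)
  then show ?case by (cases a) (auto simp: edge_One edge_Two)
qed

lemma cov_wt: "y \<in> cov r x \<Longrightarrow> Suc (wt y) = wt x"
  by (induction r x arbitrary: y rule: cov.induct) auto

lemma finite_cov[simp]: "finite (cov r x)"
  by (induction r x rule: cov.induct) auto

lemma path_wt:
  assumes "ps \<in> dpaths r w x" "i < length ps"
  shows "wt (ps ! i) + i = wt x"
  using assms(2)
proof (induction i)
  case 0
  then show ?case using assms(1) by (simp add: dpaths_def hd_conv_nth)
next
  case (Suc i)
  then have "edge r (ps ! i) (ps ! Suc i)" using assms(1) by (simp add: dpaths_def)
  then have "Suc (wt (ps ! Suc i)) = wt (ps ! i)" by (simp add: edge_cov cov_wt)
  then show ?case using Suc by simp
qed

lemma path_len:
  assumes "ps \<in> dpaths r w x"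
  shows "wt w + length ps = Suc (wt x)"
proof -
  have ne: "ps \<noteq> []" and l: "last ps = w" using assms by (auto simp: dpaths_def)
  have "wt (ps ! (length ps - 1)) + (length ps - 1) = wt x"
    using path_wt[OF assms, of "length ps - 1"] ne by simp
  moreover have "ps ! (length ps - 1) = w" using l ne by (simp add: last_conv_nth)
  ultimately show ?thesis using ne by (cases ps) auto
qed

lemma dpaths_hd: "ps \<in> dpaths r w x \<Longrightarrow> ps \<noteq> [] \<and> hd ps = x"
  by (simp add: dpaths_def)

lemma dpaths_empty: "wt x < wt w \<Longrightarrow> dpaths r w x = {}"
proof -
  assume a: "wt x < wt w"
  { fix ps assume p: "ps \<in> dpaths r w x"
    then have "ps \<noteq> []" using dpaths_hd by blast
    with path_len[OF p] have "wt w \<le> wt x" by (cases ps) auto }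
  then show ?thesis using a by fastforce
qed

lemma dpaths_rec:
  "dpaths r w x = (if w = x then {[x]} else (\<Union>y\<in>cov r x. Cons x ` dpaths r w y))"
proof (cases "w = x")
  case True
  have "ps = [x]" if "ps \<in> dpaths r x x" for ps
  proof -
    have "length ps = 1" using path_len[OF that] by simp
    moreover have "hd ps = x" using that by (simp add: dpaths_def)
    ultimately show ?thesis by (cases ps) auto
  qed
  moreover have "[x] \<in> dpaths r x x" by (simp add: dpaths_def)
  ultimately have "dpaths r x x = {[x]}" by blast
  then show ?thesis using True by simp
next
  case False
  have "ps \<in> (\<Union>y\<in>cov r x. Cons x ` dpaths r w y)" if ps: "ps \<in> dpaths r w x" for ps
  proof -
    have l: "last ps = w" using ps by (simp add: dpaths_def)
    from dpaths_hd[OF ps] obtain ps' where eq: "ps = x # ps'" by (cases ps) auto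
    have "ps' \<noteq> []" using l False eq by auto
    then obtain y ps'' where eq2: "ps' = y # ps''" by (cases ps') auto
    have e: "\<forall>i. Suc i < length ps \<longrightarrow> edge r (ps ! i) (ps ! Suc i)" using ps by (simp add: dpaths_def)
    have "edge r x y" using e[rule_format, of 0] eq eq2 by simp
    then have y: "y \<in> cov r x" by (simp add: edge_cov)
    have "ps' \<in> dpaths r w y"
      unfolding dpaths_def
    proof (intro CollectI conjI allI impI)
      show "ps' \<noteq> []" "hd ps' = y" using eq2 by auto
      show "last ps' = w" using ps eq eq2 by (simp add: dpaths_def)
      fix i assume "Suc i < length ps'"
      then show "edge r (ps' ! i) (ps' ! Suc i)" using e[rule_format, of "Suc i"] eq by simp
    qed
    then show ?thesis using y eq by blast
  qed
  moreover have "x # ps' \<in> dpaths r w x" if y: "y \<in> cov r x" and ps': "ps' \<in> dpaths r w y" for y ps'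
    unfolding dpaths_def
  proof (intro CollectI conjI allI impI)
    have ne: "ps' \<noteq> []" and h: "hd ps' = y" using ps' by (auto simp: dpaths_def)
    show "x # ps' \<noteq> []" "hd (x # ps') = x" by auto
    show "last (x # ps') = w" using ps' ne by (simp add: dpaths_def)
    fix i assume i: "Suc i < length (x # ps')"
    show "edge r ((x # ps') ! i) ((x # ps') ! Suc i)"
    proof (cases i)
      case 0 then show ?thesis using ne h y by (simp add: edge_cov hd_conv_nth)
    next
      case (Suc j) then show ?thesis using ps' i by (simp add: dpaths_def)
    qed
  qed
  ultimately have "dpaths r w x = (\<Union>y\<in>cov r x. Cons x ` dpaths r w y)" by blast
  then show ?thesis using False by simp
qed

lemma finite_dpaths: "finite (dpaths r w x)"
proof (induction "wt x" arbitrary: x rule: less_induct)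
  case less
  show ?case
  proof (cases "w = x")
    case True then show ?thesis by (subst dpaths_rec) simp
  next
    case False
    have "finite (dpaths r w y)" if "y \<in> cov r x" for y
      using less cov_wt[OF that] by simp
    then show ?thesis using False by (subst dpaths_rec) simp
  qed
qed

lemma dcount_rec:
  "dcount r w x = (if w = x then 1 else (\<Sum>y\<in>cov r x. dcount r w y))"
proof (cases "w = x")
  case True then show ?thesis unfolding dcount_def by (subst dpaths_rec) simp
next
  case False
  have "card (\<Union>y\<in>cov r x. Cons x ` dpaths r w y) = (\<Sum>y\<in>cov r x. card (Cons x ` dpaths r w y))"
  proof (rule card_UN_disjoint)
    show "\<forall>i\<in>cov r x. finite (Cons x ` dpaths r w i)" by (simp add: finite_dpaths)
    show "\<forall>i\<in>cov r x. \<forall>j\<in>cov r x. i \<noteq> j \<longrightarrow> Cons x ` dpaths r w i \<inter> Cons x ` dpaths r w j = {}"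
    proof (intro ballI impI)
      fix i j :: word assume "i \<noteq> j"
      then show "Cons x ` dpaths r w i \<inter> Cons x ` dpaths r w j = {}"
        using dpaths_hd[of _ r w i] dpaths_hd[of _ r w j] by blast
    qed
  qed simp
  also have "\<dots> = (\<Sum>y\<in>cov r x. dcount r w y)"
    by (simp add: card_image dcount_def)
  finally show ?thesis using False unfolding dcount_def by (subst dpaths_rec) simp
qed

lemma dcount_zero: "wt x < wt w \<Longrightarrow> dcount r w x = 0"
  by (simp add: dcount_def dpaths_empty)

lemma dcount_self[simp]: "dcount r x x = 1"
  by (subst dcount_rec) simp

lemma dcount_rec2:
  "dcount r w x = (if w = x then 1 else 0) + (\<Sum>y\<in>cov r x. dcount r w y)"
proof (cases "w = x")
  case True
  have "(\<Sum>y\<in>cov r x. dcount r w y) = 0"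
  proof (rule sum.neutral, rule ballI)
    fix y assume "y \<in> cov r x"
    then have "wt y < wt w" using cov_wt[of y r x] True by simp
    then show "dcount r w y = 0" by (rule dcount_zero)
  qed
  then show ?thesis using True by simp
next
  case False then show ?thesis by (subst dcount_rec) simp
qed



lemma sum_cov_Two:
  "(\<Sum>y\<in>cov r (Two # u). f y) = (\<Sum>j=1..r. f (One j # u)) + (\<Sum>y\<in>cov r u. f (Two # y))"
proof -
  have "(\<Sum>y\<in>cov r (Two # u). f y) = (\<Sum>y\<in>(\<lambda>j. One j # u) ` {1..r}. f y) + (\<Sum>y\<in>Cons Two ` cov r u. f y)"
    by (simp only: cov.simps, rule sum.union_disjoint) auto
  also have "\<dots> = (\<Sum>j=1..r. f (One j # u)) + (\<Sum>y\<in>cov r u. f (Two # y))"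
    by (simp add: sum.reindex inj_on_def)
  finally show ?thesis .
qed

lemma dcount_One: "dcount r w (One i # u) = (if w = One i # u then 1 else 0) + dcount r w u"
  by (subst dcount_rec2) simp

lemma vertex_simps[simp]: "vertex r []" "vertex r (a # w) \<longleftrightarrow> letter_ok r a \<and> vertex r w"
  by (auto simp: vertex_def)

lemma letter_ok_simps[simp]: "letter_ok r Two" "letter_ok r (One i) \<longleftrightarrow> 1 \<le> i \<and> i \<le> r"
  by (auto simp: letter_ok_def)

lemma sum_ind_One:
  assumes "vertex r w"
  shows "(\<Sum>j=1..r. (if w = One j # u then 1 else 0::real)) =
         (if w \<noteq> [] \<and> hd w \<noteq> Two \<and> tl w = u then 1 else 0)"
proof (cases w)
  case Nil then show ?thesis by simp
next
  case (Cons a w')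
  show ?thesis
  proof (cases a)
    case (One i)
    then have i: "1 \<le> i" "i \<le> r" using assms Cons by auto
    have "(\<Sum>j=1..r. (if w = One j # u then 1 else 0::real)) = (\<Sum>j\<in>{1..r}. if j = i then (if w' = u then 1 else 0) else 0)"
      using Cons One by (intro sum.cong) auto
    also have "\<dots> = (if w' = u then 1 else 0)" using i by (simp add: sum.delta)
    finally show ?thesis using Cons One by simp
  next
    case Two then show ?thesis using Cons by simp
  qed
qed

definition cterm :: "nat \<Rightarrow> word \<Rightarrow> word \<Rightarrow> real" where
  "cterm r w u = (if w = [] then 0 else real (dcount r (tl w) u))"

lemma K:
  assumes "vertex r w"
  shows "real (dcount r w (Two # u)) =
           real r * (real (wt u) + 1 - real (wt w)) * real (dcount r w u) + cterm r w u"
proof (induction "wt u" arbitrary: u rule: less_induct)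
  case less
  define ind where "ind = (\<lambda>P. if P then 1 else (0::real))"
  have IH: "real (dcount r w (Two # y)) = real r * (real (wt u) - real (wt w)) * real (dcount r w y) + cterm r w y"
    if "y \<in> cov r u" for y
  proof -
    have "Suc (wt y) = wt u" using cov_wt[OF that] .
    then show ?thesis using less[of y] by simp
  qed
  have "real (dcount r w (Two # u)) = ind (w = Two # u) + (\<Sum>y\<in>cov r (Two # u). real (dcount r w y))"
    by (subst dcount_rec2) (simp add: ind_def)
  also have "\<dots> = ind (w = Two # u) + (\<Sum>j=1..r. real (dcount r w (One j # u))) + (\<Sum>y\<in>cov r u. real (dcount r w (Two # y)))"
    by (subst sum_cov_Two) (simp only: add.assoc)
  also have "(\<Sum>j=1..r. real (dcount r w (One j # u))) = (\<Sum>j=1..r. (if w = One j # u then 1 else 0::real)) + real r * real (dcount r w u)"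
    by (simp add: dcount_One sum.distrib, rule sum.cong, simp_all)
  also have "\<dots> = ind (w \<noteq> [] \<and> hd w \<noteq> Two \<and> tl w = u) + real r * real (dcount r w u)"
    using sum_ind_One[OF assms] by (simp add: ind_def)
  also have "(\<Sum>y\<in>cov r u. real (dcount r w (Two # y))) = (\<Sum>y\<in>cov r u. real r * (real (wt u) - real (wt w)) * real (dcount r w y) + cterm r w y)"
    using IH by (intro sum.cong) auto
  also have "\<dots> = real r * (real (wt u) - real (wt w)) * (\<Sum>y\<in>cov r u. real (dcount r w y)) + (\<Sum>y\<in>cov r u. cterm r w y)"
    by (simp add: sum.distrib sum_distrib_left)
  also have "(\<Sum>y\<in>cov r u. real (dcount r w y)) = real (dcount r w u) - ind (w = u)"
    by (subst (2) dcount_rec2) (simp add: ind_def)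
  also have "(\<Sum>y\<in>cov r u. cterm r w y) = cterm r w u - ind (w \<noteq> [] \<and> tl w = u)"
  proof (cases "w = []")
    case True then show ?thesis by (simp add: cterm_def ind_def)
  next
    case False
    then show ?thesis unfolding cterm_def by (subst (2) dcount_rec2) (simp add: ind_def)
  qed
  finally have eq: "real (dcount r w (Two # u)) = ind (w = Two # u) + (ind (w \<noteq> [] \<and> hd w \<noteq> Two \<and> tl w = u) + real r * real (dcount r w u)) +
    (real r * (real (wt u) - real (wt w)) * (real (dcount r w u) - ind (w = u)) + (cterm r w u - ind (w \<noteq> [] \<and> tl w = u)))" .
  have i1: "ind (w = Two # u) + ind (w \<noteq> [] \<and> hd w \<noteq> Two \<and> tl w = u) = ind (w \<noteq> [] \<and> tl w = u)"
    by (cases w) (auto simp: ind_def)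
  have i2: "(real (wt u) - real (wt w)) * ind (w = u) = 0" by (simp add: ind_def)
  have e3: "real r * (real (wt u) - real (wt w)) * (real (dcount r w u) - ind (w = u)) =
     real r * (real (wt u) - real (wt w)) * real (dcount r w u) - real r * ((real (wt u) - real (wt w)) * ind (w = u))"
    by (simp add: algebra_simps)
  have e4: "real r * (real (wt u) + 1 - real (wt w)) * real (dcount r w u) =
     real r * real (dcount r w u) + real r * (real (wt u) - real (wt w)) * real (dcount r w u)"
    by (simp add: algebra_simps)
  show ?case using eq i1 e3 e4 unfolding i2 by linarith
qed



lemma wt_Cons: "wt (b # y) = digit b + wt y" by (simp add: wt_def)
lemma wt_append: "wt (x @ y) = wt x + wt y" by (simp add: wt_def)
lemma digit_ge1: "1 \<le> digit b" by (cases b) (auto simp: digit_def)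
lemma wt_ge_length: "length x \<le> wt x"
  by (induction x) (auto simp: wt_Cons intro: order_trans[OF _ add_mono[OF digit_ge1]])

lemma D_One: "dcount r [] (One i # u) = dcount r [] u"
  by (simp add: dcount_One)

lemma D_Two: "real (dcount r [] (Two # u)) = real r * (real (wt u) + 1) * real (dcount r [] u)"
  using K[of r "[]" u] by (simp add: cterm_def)

lemma D_pos: "1 \<le> r \<Longrightarrow> 0 < dcount r [] x"
proof (induction x)
  case Nil then show ?case by simp
next
  case (Cons b x)
  show ?case
  proof (cases b)
    case (One i) then show ?thesis using Cons by (simp add: D_One)
  next
    case Two
    have "0 < real r * (real (wt x) + 1) * real (dcount r [] x)" using Cons by simp
    then show ?thesis using Two D_Two[of r x] by (metis of_nat_0_less_iff)
  qed
qed

lemma ratio_One: "wt w \<le> wt u \<Longrightarrow> ratio r w (One i # u) = ratio r w u"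
proof -
  assume a: "wt w \<le> wt u"
  then have "w \<noteq> One i # u" by auto
  then show ?thesis using a by (simp add: ratio_def dcount_One D_One)
qed

definition kap :: "nat \<Rightarrow> word \<Rightarrow> real" where
  "kap r w = (if w = [] then 0 else real (dcount r [] w) / (real r * real (dcount r [] (tl w))))"

lemma ratio_Two:
  assumes r: "1 \<le> r" and v: "vertex r w"
  shows "ratio r w (Two # u) = ratio r w u +
     (kap r w * ratio r (tl w) u - real (wt w) * ratio r w u) / (real (wt u) + 1)"
proof -
  have Du: "0 < real (dcount r [] u)" using D_pos[OF r] by simp
  have Dtl: "0 < real (dcount r [] (tl w))" using D_pos[OF r] by simp
  have rp: "0 < real r" using r by simp
  have Wp: "0 < real (wt u) + 1" by simp
  have aux: "a * (r' * (N - W) * b + c) / (r' * N * Du') = a * b / Du' + (a / (r' * Dt) * (Dt * c / Du') - W * (a * b / Du')) / N"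
    if "0 < r'" "0 < Du'" "0 < Dt" "0 < N" for a r' N W b c Du' Dt :: real
    using that by (simp add: field_simps)
  show ?thesis
  proof (cases "w = []")
    case True
    then show ?thesis unfolding ratio_def D_Two K[OF v] cterm_def kap_def
      using aux[OF rp Du Dtl Wp, of 1 0 "real (dcount r [] u)" 0] by simp
  next
    case False
    then show ?thesis unfolding ratio_def D_Two K[OF v] cterm_def kap_def
      using aux[OF rp Du Dtl Wp, of "real (dcount r [] w)" "real (wt w)" "real (dcount r w u)" "real (dcount r (tl w) u)"]
      by (simp add: algebra_simps)
  qed
qed

primrec Ev :: "(word \<Rightarrow> real) \<Rightarrow> (word \<Rightarrow> real) \<Rightarrow> word \<Rightarrow> nat \<Rightarrow> real" where
  "Ev psi ka [] k = (if k = 0 then psi [] else 0)"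
| "Ev psi ka (b # z) k =
     (if k < wt (b # z) then ka (b # z) * Ev psi ka z k / (real (wt (b # z)) - real k)
      else if k = wt (b # z) then psi (b # z) - (\<Sum>j<wt (b # z). ka (b # z) * Ev psi ka z j / (real (wt (b # z)) - real j))
      else 0)"

lemma Ev_zero: "wt w < k \<Longrightarrow> Ev psi ka w k = 0"
  by (cases w) auto

lemma Ev_sum: "(\<Sum>k\<le>wt w. Ev psi ka w k) = psi w"
proof (cases w)
  case Nil then show ?thesis by simp
next
  case (Cons b z)
  obtain W where W: "wt w = Suc W" using Cons by (cases b) auto
  have "(\<Sum>k\<le>wt w. Ev psi ka w k) = (\<Sum>k<wt w. Ev psi ka w k) + Ev psi ka w (wt w)"
    by (simp add: W lessThan_Suc_atMost[symmetric])
  also have "(\<Sum>k<wt w. Ev psi ka w k) = (\<Sum>j<wt w. ka w * Ev psi ka z j / (real (wt w) - real j))"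
    using Cons by (intro sum.cong) auto
  finally show ?thesis using Cons by simp
qed

lemma Ev_sum': "wt w \<le> M \<Longrightarrow> (\<Sum>k\<le>M. Ev psi ka w k) = psi w"
proof -
  assume a: "wt w \<le> M"
  have "(\<Sum>k\<le>M. Ev psi ka w k) = (\<Sum>k\<le>wt w. Ev psi ka w k)"
    using a by (intro sum.mono_neutral_right) (auto simp: Ev_zero)
  then show ?thesis by (simp add: Ev_sum)
qed

lemma Ev_eig:
  assumes "ka [] = 0"
  shows "(real (wt w) - real k) * Ev psi ka w k = ka w * Ev psi ka (tl w) k"
proof (cases w)
  case Nil then show ?thesis using assms by simp
next
  case (Cons b z)
  have wz: "wt z < wt w" using Cons by (cases b) auto
  consider "k < wt w" | "k = wt w" | "wt w < k" by linarith
  then show ?thesis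
  proof cases
    case 1 then show ?thesis using Cons by simp
  next
    case 2 then show ?thesis using Cons wz Ev_zero[of z k] by simp
  next
    case 3 then show ?thesis using Cons wz Ev_zero[of z k] by simp
  qed
qed

definition fk :: "nat \<Rightarrow> iword \<Rightarrow> nat \<Rightarrow> real" where
  "fk k a j = (if a j = Two then 1 - real k / (real (\<Sum>m<j. digit (a m)) + 1) else 1)"

definition Pk :: "nat \<Rightarrow> iword \<Rightarrow> nat \<Rightarrow> nat \<Rightarrow> real" where
  "Pk k a lo hi = (\<Prod>j\<in>{lo..<hi}. fk k a j)"

lemma rix_Cons: "rix (b # y) j = (if j < length y then rix y j else if j = length y then b else Two)"
  by (auto simp: rix_def nth_append)

lemma sum_digit_rix: "(\<Sum>m<length y. digit (rix y m)) = wt y"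
proof (induction y)
  case Nil then show ?case by simp
next
  case (Cons b y)
  have "(\<Sum>m<length (b # y). digit (rix (b # y) m)) = (\<Sum>m<length y. digit (rix (b # y) m)) + digit b"
    by (simp add: rix_Cons)
  also have "(\<Sum>m<length y. digit (rix (b # y) m)) = (\<Sum>m<length y. digit (rix y m))"
    by (intro sum.cong) (auto simp: rix_Cons)
  finally show ?case using Cons by (simp add: wt_Cons)
qed

lemma fk_cong: "(\<And>m. m \<le> j \<Longrightarrow> a m = b m) \<Longrightarrow> fk k a j = fk k b j"
proof -
  assume h: "\<And>m. m \<le> j \<Longrightarrow> a m = b m"
  have "(\<Sum>m<j. digit (a m)) = (\<Sum>m<j. digit (b m))" using h by (intro sum.cong) auto
  then show ?thesis unfolding fk_def using h[of j] by simp
qed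

lemma Pk_cong: "(\<And>m. m < hi \<Longrightarrow> a m = b m) \<Longrightarrow> Pk k a lo hi = Pk k b lo hi"
  unfolding Pk_def by (intro prod.cong refl fk_cong) auto

lemma Pk_Cons:
  assumes "lo \<le> length y"
  shows "Pk k (rix (b # y)) lo (length (b # y)) =
     Pk k (rix y) lo (length y) * (if b = Two then 1 - real k / (real (wt y) + 1) else 1)"
proof -
  have "Pk k (rix (b # y)) lo (length (b # y)) = Pk k (rix (b # y)) lo (length y) * fk k (rix (b # y)) (length y)"
    unfolding Pk_def using assms by (simp add: prod.atLeastLessThan_Suc)
  also have "Pk k (rix (b # y)) lo (length y) = Pk k (rix y) lo (length y)"
    by (rule Pk_cong) (simp add: rix_Cons)
  also have "(\<Sum>m<length y. digit (rix (b # y) m)) = (\<Sum>m<length y. digit (rix y m))"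
    by (intro sum.cong) (auto simp: rix_Cons)
  then have "fk k (rix (b # y)) (length y) = (if b = Two then 1 - real k / (real (wt y) + 1) else 1)"
    unfolding fk_def by (simp add: rix_Cons sum_digit_rix)
  finally show ?thesis .
qed

lemma kap_Nil: "kap r [] = 0" by (simp add: kap_def)

lemma wt_tl: "wt (tl w) \<le> wt w" by (cases w) (auto simp: wt_Cons)

lemma vertex_tl: "vertex r w \<Longrightarrow> vertex r (tl w)" by (cases w) auto

lemma inv:
  assumes r: "1 \<le> r"
  shows "vertex r w \<Longrightarrow> wt w \<le> wt t \<Longrightarrow> ratio r w (q @ t) =
     (\<Sum>k\<le>wt t. Pk k (rix (q @ t)) (length t) (length (q @ t)) * Ev (\<lambda>x. ratio r x t) (kap r) w k)"
proof (induction q arbitrary: w)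
  case Nil
  then show ?case by (simp add: Pk_def Ev_sum')
next
  case (Cons b q)
  define y where "y = q @ t"
  define E where "E = Ev (\<lambda>x. ratio r x t) (kap r)"
  have ly: "length t \<le> length y" by (simp add: y_def)
  have wy: "wt t \<le> wt y" by (simp add: y_def wt_append)
  have IH: "ratio r w' y = (\<Sum>k\<le>wt t. Pk k (rix y) (length t) (length y) * E w' k)"
    if "vertex r w'" "wt w' \<le> wt t" for w' using Cons.IH that by (simp add: y_def E_def)
  show ?case
  proof (cases b)
    case (One i)
    have "ratio r w (b # y) = ratio r w y" using One ratio_One Cons.prems wy by simp
    then show ?thesis using IH[OF Cons.prems] Pk_Cons[OF ly] One by (simp add: y_def E_def)
  next
    case Two
    define N where "N = real (wt y) + 1"
    have Np: "0 < N" by (simp add: N_def)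
    define P where "P k = Pk k (rix y) (length t) (length y)" for k
    have Sw: "ratio r w y = (\<Sum>k\<le>wt t. P k * E w k)" using IH[OF Cons.prems] by (simp add: P_def)
    have St: "ratio r (tl w) y = (\<Sum>k\<le>wt t. P k * E (tl w) k)"
      using IH[OF vertex_tl[OF Cons.prems(1)]] Cons.prems(2) wt_tl[of w] by (simp add: P_def)
    have "ratio r w (b # y) = ratio r w y + (kap r w * ratio r (tl w) y - real (wt w) * ratio r w y) / N"
      using ratio_Two[OF r Cons.prems(1)] Two by (simp add: N_def)
    also have "\<dots> = (\<Sum>k\<le>wt t. P k * E w k + (P k * (kap r w * E (tl w) k) - P k * (real (wt w) * E w k)) / N)"
      unfolding Sw St sum.distrib sum_divide_distrib[symmetric] sum_subtractf sum_distrib_left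
      by (simp add: algebra_simps)
    also have "\<dots> = (\<Sum>k\<le>wt t. (P k * (1 - real k / N)) * E w k)"
    proof (intro sum.cong refl)
      fix k
      have hh: "kap r w * E (tl w) k = (real (wt w) - real k) * E w k"
        using Ev_eig[of "kap r" w k, OF kap_Nil] by (simp add: E_def)
      show "P k * E w k + (P k * (kap r w * E (tl w) k) - P k * (real (wt w) * E w k)) / N =
         (P k * (1 - real k / N)) * E w k"
        unfolding hh using Np by (simp add: field_simps)
    qed
    finally show ?thesis using Pk_Cons[OF ly, of _ b] Two by (simp add: y_def E_def P_def N_def)
  qed
qed



lemma bern:
  fixes x :: real
  assumes "0 \<le> x" "x \<le> 1"
  shows "1 - real k * x \<le> (1 - x) ^ k \<and> (1 - x) ^ k \<le> 1 - real k * x + (real k)^2 * x^2"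
proof (induction k)
  case 0 then show ?case by simp
next
  case (Suc k)
  have l: "1 - real k * x \<le> (1 - x) ^ k" and u: "(1 - x) ^ k \<le> 1 - real k * x + (real k)^2 * x^2"
    using Suc by auto
  have nx: "0 \<le> 1 - x" using assms by simp
  have "(1 - x) * (1 - real k * x) \<le> (1 - x) * (1 - x) ^ k" using mult_left_mono[OF l nx] .
  moreover have "1 - real (Suc k) * x \<le> (1 - x) * (1 - real k * x)"
    using assms by (simp add: algebra_simps)
  ultimately have A: "1 - real (Suc k) * x \<le> (1 - x) ^ Suc k" by simp
  have "(1 - x) * (1 - x) ^ k \<le> (1 - x) * (1 - real k * x + (real k)^2 * x^2)" using mult_left_mono[OF u nx] .
  moreover have "(1 - x) * (1 - real k * x + (real k)^2 * x^2) \<le> 1 - real (Suc k) * x + (real (Suc k))^2 * x^2"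
  proof -
    have "(1 - x) * (1 - real k * x + (real k)^2 * x^2) = 1 - real (Suc k) * x + (real k + (real k)^2) * x^2 - (real k)^2 * x^3"
      by (simp add: algebra_simps power2_eq_square power3_eq_cube)
    also have "\<dots> \<le> 1 - real (Suc k) * x + (real (Suc k))^2 * x^2"
    proof -
      have "(real k + (real k)^2) * x^2 \<le> (real (Suc k))^2 * x^2"
        by (intro mult_right_mono) (auto simp: power2_eq_square algebra_simps)
      moreover have "0 \<le> (real k)^2 * x^3" using assms by simp
      ultimately show ?thesis by linarith
    qed
    finally show ?thesis .
  qed
  ultimately have B: "(1 - x) ^ Suc k \<le> 1 - real (Suc k) * x + (real (Suc k))^2 * x^2" by simp
  show ?case using A B by simp
qed

definition Gv :: "iword \<Rightarrow> nat \<Rightarrow> real" where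
  "Gv a j = real (\<Sum>m<j. digit (a m)) + 1"

lemma Gv_ge: "real j + 1 \<le> Gv a j"
proof -
  have "(\<Sum>m<j. 1) \<le> (\<Sum>m<j. digit (a m))" by (intro sum_mono digit_ge1)
  then have "j \<le> (\<Sum>m<j. digit (a m))" by simp
  then have h: "real j \<le> real (\<Sum>m<j. digit (a m))" by (simp only: of_nat_le_iff)
  show ?thesis unfolding Gv_def using h by linarith
qed

lemma fk_Gv: "fk k a j = (if a j = Two then 1 - real k / Gv a j else 1)"
  by (simp add: fk_def Gv_def)

lemma fk_bounds:
  assumes "k \<le> j + 1"
  shows "0 \<le> fk k a j" "fk k a j \<le> 1" "fk k a j \<le> (fk 1 a j) ^ k"
        "(fk 1 a j) ^ k - fk k a j \<le> (real k)^2 / (real j + 1)^2"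
proof -
  have G: "real j + 1 \<le> Gv a j" by (rule Gv_ge)
  have Gp: "0 < Gv a j" using G by linarith
  define x where "x = 1 / Gv a j"
  have x0: "0 \<le> x" and x1: "x \<le> 1" using G Gp by (auto simp: x_def)
  have kx: "real k * x \<le> 1" using assms G Gp by (simp add: x_def field_simps)
  have xs: "x^2 \<le> 1 / (real j + 1)^2"
    unfolding x_def using G Gp by (simp add: power_divide divide_simps power_mono)
  note b = bern[OF x0 x1, of k]
  have e: "fk k a j = (if a j = Two then 1 - real k * x else 1)" "fk 1 a j = (if a j = Two then 1 - x else 1)"
    by (simp_all add: fk_Gv x_def)
  show "0 \<le> fk k a j" using e kx by simp
  show "fk k a j \<le> 1" using e x0 by simp
  show "fk k a j \<le> (fk 1 a j) ^ k" using e b by simp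
  have "(real k)^2 * x^2 \<le> (real k)^2 * (1 / (real j + 1)^2)" by (rule mult_left_mono[OF xs]) simp
  then show "(fk 1 a j) ^ k - fk k a j \<le> (real k)^2 / (real j + 1)^2" using e b by auto
qed

lemma fk1_pos: "1 \<le> j \<Longrightarrow> 0 < fk 1 a j"
proof -
  assume j: "1 \<le> j"
  have "real j + 1 \<le> Gv a j" by (rule Gv_ge)
  then have "1 < Gv a j" using j by simp
  then show ?thesis by (simp add: fk_Gv)
qed

lemma Pk_bounds:
  assumes "k \<le> lo"
  shows "0 \<le> Pk k a lo hi" "Pk k a lo hi \<le> 1" "Pk k a lo hi \<le> (Pk 1 a lo hi) ^ k"
proof -
  have fb: "0 \<le> fk k a j \<and> fk k a j \<le> 1 \<and> fk k a j \<le> (fk 1 a j) ^ k" if "j \<in> {lo..<hi}" for j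
    using fk_bounds[of k j a] that assms by auto
  show "0 \<le> Pk k a lo hi" unfolding Pk_def using fb by (intro prod_nonneg) auto
  show "Pk k a lo hi \<le> 1" unfolding Pk_def using fb by (intro prod_le_1) auto
  show "Pk k a lo hi \<le> (Pk 1 a lo hi) ^ k" unfolding Pk_def prod_power_distrib
    using fb by (intro prod_mono) auto
qed

lemma Pk1_pos: assumes "1 \<le> lo" shows "0 < Pk 1 a lo hi"
  unfolding Pk_def
proof (rule prod_pos)
  fix j assume "j \<in> {lo..<hi}"
  then show "0 < fk 1 a j" using assms by (intro fk1_pos) auto
qed

lemma tele_aux: "1 \<le> N \<Longrightarrow> N \<le> M \<Longrightarrow> (\<Sum>j\<in>{N..<M}. 1 / (real j + 1)^2) \<le> 1 / real N - 1 / real M"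
proof (induction M)
  case 0 then show ?case by simp
next
  case (Suc M)
  show ?case
  proof (cases "N = Suc M")
    case True then show ?thesis by simp
  next
    case False
    then have NM: "N \<le> M" using Suc.prems by simp
    have m: "1 \<le> M" using NM Suc.prems by simp
    have p: "0 < real M * (real M + 1)" using m by simp
    have "1 / (real M + 1)^2 \<le> 1 / (real M * (real M + 1))"
      by (rule divide_left_mono) (use p in \<open>auto simp: power2_eq_square\<close>)
    also have "\<dots> = 1 / real M - 1 / real (Suc M)" using m by (simp add: field_simps)
    finally show ?thesis using Suc.IH[OF Suc.prems(1) NM] NM by simp
  qed
qed

lemma telescope: "1 \<le> N \<Longrightarrow> (\<Sum>j\<in>{N..<M}. 1 / (real j + 1)^2) \<le> 1 / real N"
proof -
  assume N: "1 \<le> N"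
  show ?thesis
  proof (cases "N \<le> M")
    case True
    have "0 \<le> 1 / real M" by simp
    then show ?thesis using tele_aux[OF N True] by linarith
  next
    case False
    then show ?thesis by simp
  qed
qed

lemma Pk_diff:
  assumes "1 \<le> N" "k \<le> N"
  shows "\<bar>Pk k a N M - (Pk 1 a N M) ^ k\<bar> \<le> (real k)^2 / real N"
proof -
  have fb: "0 \<le> fk k a j \<and> fk k a j \<le> 1 \<and> 0 \<le> fk 1 a j \<and> fk 1 a j \<le> 1 \<and> fk k a j \<le> (fk 1 a j) ^ k
     \<and> (fk 1 a j) ^ k - fk k a j \<le> (real k)^2 / (real j + 1)^2" if "j \<in> {N..<M}" for j
    using fk_bounds[of k j a] fk_bounds[of 1 j a] that assms by auto
  have "\<bar>Pk k a N M - (Pk 1 a N M) ^ k\<bar> = norm ((\<Prod>j\<in>{N..<M}. fk k a j) - (\<Prod>j\<in>{N..<M}. (fk 1 a j) ^ k))"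
    by (simp add: Pk_def prod_power_distrib)
  also have "\<dots> \<le> (\<Sum>j\<in>{N..<M}. norm (fk k a j - (fk 1 a j) ^ k))"
  proof (rule norm_prod_diff)
    fix j assume "j \<in> {N..<M}"
    with fb[of j] show "norm (fk k a j) \<le> 1" "norm ((fk 1 a j) ^ k) \<le> 1"
      by (simp_all add: power_le_one)
  qed
  also have "\<dots> \<le> (\<Sum>j\<in>{N..<M}. (real k)^2 * (1 / (real j + 1)^2))"
    using fb by (intro sum_mono) auto
  also have "\<dots> = (real k)^2 * (\<Sum>j\<in>{N..<M}. 1 / (real j + 1)^2)" by (simp add: sum_distrib_left)
  also have "\<dots> \<le> (real k)^2 * (1 / real N)" by (intro mult_left_mono telescope assms) simp
  finally show ?thesis by simp
qed

lemma tri3: fixes p q A B :: real shows "\<bar>p - q\<bar> \<le> \<bar>p - A\<bar> + \<bar>A - B\<bar> + \<bar>q - B\<bar>"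
  by (smt (verit))

lemma common_limit:
  fixes x x' y y' :: "nat \<Rightarrow> real"
  assumes y: "y \<longlonglongrightarrow> Y" and y': "y' \<longlonglongrightarrow> Y"
    and b: "\<And>e. 0 < e \<Longrightarrow> \<exists>a. \<bar>a\<bar> \<le> 1 \<and> (\<forall>\<^sub>F n in sequentially. \<bar>x n - a * y n\<bar> \<le> e \<and> \<bar>x' n - a * y' n\<bar> \<le> e)"
  shows "\<exists>L. x \<longlonglongrightarrow> L \<and> x' \<longlonglongrightarrow> L"
proof -
  have cauchy: "Cauchy z" if yz: "yy \<longlonglongrightarrow> Y"
    and bz: "\<And>e. 0 < e \<Longrightarrow> \<exists>a. \<bar>a\<bar> \<le> 1 \<and> (\<forall>\<^sub>F n in sequentially. \<bar>z n - a * yy n\<bar> \<le> e)"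
    for z yy :: "nat \<Rightarrow> real"
  proof (rule metric_CauchyI)
    fix e :: real assume e: "0 < e"
    obtain a where a: "\<bar>a\<bar> \<le> 1" and ev: "\<forall>\<^sub>F n in sequentially. \<bar>z n - a * yy n\<bar> \<le> e / 8"
      using bz[of "e/8"] e by auto
    from ev obtain M1 where M1: "\<And>n. n \<ge> M1 \<Longrightarrow> \<bar>z n - a * yy n\<bar> \<le> e / 8"
      by (auto simp: eventually_sequentially)
    have "Cauchy yy" using yz by (rule LIMSEQ_imp_Cauchy)
    then obtain M2 where M2: "\<And>m n. m \<ge> M2 \<Longrightarrow> n \<ge> M2 \<Longrightarrow> dist (yy m) (yy n) < e / 2"
      using e by (metis Cauchy_def half_gt_zero)
    show "\<exists>M. \<forall>m\<ge>M. \<forall>n\<ge>M. dist (z m) (z n) < e"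
    proof (intro exI allI impI)
      fix m n assume m: "max M1 M2 \<le> m" and n: "max M1 M2 \<le> n"
      have d1: "\<bar>z m - a * yy m\<bar> \<le> e / 8" "\<bar>z n - a * yy n\<bar> \<le> e / 8" using M1 m n by auto
      have "\<bar>yy m - yy n\<bar> < e / 2" using M2[of m n] m n by (simp add: dist_real_def)
      then have "\<bar>a\<bar> * \<bar>yy m - yy n\<bar> \<le> 1 * (e / 2)" using a by (intro mult_mono) auto
      then have "\<bar>a * yy m - a * yy n\<bar> \<le> e / 2" by (simp add: abs_mult[symmetric] algebra_simps)
      then show "dist (z m) (z n) < e" unfolding dist_real_def using d1 e by linarith
    qed
  qed
  have "Cauchy x" by (rule cauchy[OF y]) (use b in \<open>blast intro: eventually_mono\<close>)
  then obtain L where L: "x \<longlonglongrightarrow> L" using Cauchy_convergent_iff convergent_def by blast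
  have "Cauchy x'" by (rule cauchy[OF y']) (use b in \<open>blast intro: eventually_mono\<close>)
  then obtain L' where L': "x' \<longlonglongrightarrow> L'" using Cauchy_convergent_iff convergent_def by blast
  have "(\<lambda>n. x n - x' n) \<longlonglongrightarrow> 0"
  proof (rule LIMSEQ_I)
    fix e :: real assume e: "0 < e"
    obtain a where a: "\<bar>a\<bar> \<le> 1" and ev: "\<forall>\<^sub>F n in sequentially. \<bar>x n - a * y n\<bar> \<le> e / 8 \<and> \<bar>x' n - a * y' n\<bar> \<le> e / 8"
      using b[of "e/8"] e by auto
    have "(\<lambda>n. y n - y' n) \<longlonglongrightarrow> 0" using tendsto_diff[OF y y'] by simp
    from LIMSEQ_D[OF this, of "e/2"] e obtain M0 where "\<forall>n\<ge>M0. norm (y n - y' n - 0) < e / 2" by auto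
    then have ev2: "\<forall>\<^sub>F n in sequentially. \<bar>y n - y' n\<bar> < e / 2"
      by (auto simp: eventually_sequentially)
    from ev ev2 obtain M where M: "\<And>n. n \<ge> M \<Longrightarrow> (\<bar>x n - a * y n\<bar> \<le> e / 8 \<and> \<bar>x' n - a * y' n\<bar> \<le> e / 8) \<and> \<bar>y n - y' n\<bar> < e / 2"
      using eventually_conj[OF ev ev2] by (auto simp: eventually_sequentially)
    show "\<exists>no. \<forall>n\<ge>no. norm (x n - x' n - 0) < e"
    proof (intro exI allI impI)
      fix n assume n: "M \<le> n"
      note Mn = M[OF n]
      have "\<bar>a\<bar> * \<bar>y n - y' n\<bar> \<le> 1 * (e / 2)" using a Mn by (intro mult_mono) auto
      then have "\<bar>a * y n - a * y' n\<bar> \<le> e / 2" by (simp add: abs_mult[symmetric] algebra_simps)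
      then show "norm (x n - x' n - 0) < e" using Mn e tri3[of "x n" "x' n" "a * y n" "a * y' n"] by simp
    qed
  qed
  moreover have "(\<lambda>n. x n - x' n) \<longlonglongrightarrow> L - L'" using tendsto_diff[OF L L'] .
  ultimately have "L - L' = 0" using LIMSEQ_unique by blast
  then show ?thesis using L L' by auto
qed



definition tw :: "iword \<Rightarrow> nat \<Rightarrow> word" where
  "tw v L = rev (map v [0..<L])"

lemma length_tw[simp]: "length (tw v L) = L" by (simp add: tw_def)

lemma rix_tw: "i < L \<Longrightarrow> rix (tw v L) i = v i"
  by (simp add: tw_def rix_def)

lemma split_tw:
  assumes "L \<le> length x" "\<forall>i<L. rev x ! i = v i"
  shows "x = take (length x - L) x @ tw v L"
proof -
  have "take L (rev x) = map v [0..<L]"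
    using assms by (intro nth_equalityI) auto
  then have "drop (length x - L) x = tw v L"
    using rev_take[of L "rev x"] by (simp add: tw_def)
  then show ?thesis by (metis append_take_drop_id)
qed

lemma rix_eq: "K \<le> length x \<Longrightarrow> \<forall>i<K. rev x ! i = v i \<Longrightarrow> i < K \<Longrightarrow> rix x i = v i"
  by (simp add: rix_def)

lemma Pk_split: "lo \<le> N \<Longrightarrow> N \<le> hi \<Longrightarrow> Pk k a lo hi = Pk k a lo N * Pk k a N hi"
  unfolding Pk_def by (simp add: prod.atLeastLessThan_concat)

lemma Pk_zero: "Pk 0 a lo hi = 1"
  unfolding Pk_def fk_def by (rule prod.neutral) simp

lemma pfac_cong: "(\<And>m. m \<le> j \<Longrightarrow> a m = b m) \<Longrightarrow> pfac a j = pfac b j"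
proof -
  assume h: "\<And>m. m \<le> j \<Longrightarrow> a m = b m"
  have "gval a j = gval b j" unfolding gval_def using h by (metis atMost_iff sum.cong)
  then show ?thesis unfolding pfac_def using h[of j] by simp
qed

lemma pfac_fk: assumes "1 \<le> j" shows "pfac a j = fk 1 a j"
proof (cases "a j = Two")
  case True
  define S where "S = (\<Sum>m<j. digit (a m))"
  have "(\<Sum>m<j. 1) \<le> S" unfolding S_def by (intro sum_mono digit_ge1)
  then have Sj: "j \<le> S" by simp
  have "(\<Sum>m\<le>j. digit (a m)) = S + 2"
    using True by (simp add: S_def lessThan_Suc_atMost[symmetric] digit_def)
  then have g: "gval a j = S + 1" by (simp add: gval_def)
  have Sp: "0 < real S + 1" by simp
  show ?thesis using True g Sj assms Sp unfolding pfac_def fk_def S_def[symmetric]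
    by (simp add: field_simps)
qed (simp add: pfac_def fk_def)

lemma pfac_pos: "0 < pfac a j"
  unfolding pfac_def by auto

definition piL :: "iword \<Rightarrow> nat \<Rightarrow> real" where
  "piL v L = (\<Prod>j<L. pfac v j)"

lemma piL_pos: "0 < piL v L"
  unfolding piL_def by (intro prod_pos) (simp add: pfac_pos)

lemma pi_fin_split:
  assumes L: "1 \<le> L" "L \<le> length x" and ag: "\<And>i. i < L \<Longrightarrow> rix x i = v i"
  shows "pi_fin x = piL v L * Pk 1 (rix x) L (length x)"
proof -
  have "pi_fin x = (\<Prod>j\<in>{0..<L}. pfac (rix x) j) * (\<Prod>j\<in>{L..<length x}. pfac (rix x) j)"
    unfolding pi_fin_def lessThan_atLeast0 using L by (simp add: prod.atLeastLessThan_concat)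
  also have "(\<Prod>j\<in>{0..<L}. pfac (rix x) j) = piL v L"
    unfolding piL_def lessThan_atLeast0 by (intro prod.cong refl pfac_cong) (use ag in auto)
  also have "(\<Prod>j\<in>{L..<length x}. pfac (rix x) j) = Pk 1 (rix x) L (length x)"
    unfolding Pk_def using L by (intro prod.cong refl pfac_fk) auto
  finally show ?thesis .
qed

lemma ratio_repr:
  assumes r: "1 \<le> r" and w: "vertex r w" and L: "wt w < L"
    and x: "L \<le> length x" "\<forall>i<L. rev x ! i = v i"
  shows "ratio r w x = (\<Sum>k\<le>wt w. Pk k (rix x) L (length x) * Ev (\<lambda>y. ratio r y (tw v L)) (kap r) w k)"
proof -
  define t where "t = tw v L"
  have wt_t: "wt w \<le> wt t" using L wt_ge_length[of t] by (simp add: t_def)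
  have xe: "x = take (length x - L) x @ t" using split_tw[OF x] by (simp add: t_def)
  have "ratio r w x = (\<Sum>k\<le>wt t. Pk k (rix x) L (length x) * Ev (\<lambda>y. ratio r y t) (kap r) w k)"
  proof -
    have le: "length x - L + L = length x" using x(1) by simp
    show ?thesis using inv[OF r w wt_t, of "take (length x - L) x"] xe[symmetric] le by (simp add: t_def)
  qed
  also have "\<dots> = (\<Sum>k\<le>wt w. Pk k (rix x) L (length x) * Ev (\<lambda>y. ratio r y t) (kap r) w k)"
    using wt_t by (intro sum.mono_neutral_right) (auto simp: Ev_zero)
  finally show ?thesis by (simp add: t_def)
qed

lemma letterwise_ev:
  assumes "letterwise vs v"
  shows "\<forall>\<^sub>F n in sequentially. K \<le> length (vs n) \<and> (\<forall>i<K. rev (vs n) ! i = v i)"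
  using assms unfolding letterwise_def by blast

lemma y_lim:
  assumes lw: "letterwise vs v" and L: "1 \<le> L" and pc: "(\<lambda>n. pi_fin (vs n)) \<longlonglongrightarrow> c"
  shows "(\<lambda>n. (Pk 1 (rix (vs n)) L (length (vs n))) ^ k) \<longlonglongrightarrow> (c / piL v L) ^ k"
proof -
  have nz: "piL v L \<noteq> 0" using piL_pos[of v L] by simp
  have "(\<lambda>n. (pi_fin (vs n) / piL v L) ^ k) \<longlonglongrightarrow> (c / piL v L) ^ k"
    by (intro tendsto_intros pc nz)
  moreover have "\<forall>\<^sub>F n in sequentially. (pi_fin (vs n) / piL v L) ^ k = (Pk 1 (rix (vs n)) L (length (vs n))) ^ k"
    using letterwise_ev[OF lw, of L]
  proof (rule eventually_mono)
    fix n assume h: "L \<le> length (vs n) \<and> (\<forall>i<L. rev (vs n) ! i = v i)"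
    have "pi_fin (vs n) = piL v L * Pk 1 (rix (vs n)) L (length (vs n))"
      using h L by (intro pi_fin_split) (auto simp: rix_def)
    then show "(pi_fin (vs n) / piL v L) ^ k = (Pk 1 (rix (vs n)) L (length (vs n))) ^ k"
    proof -
      have "piL v L \<noteq> 0" using piL_pos[of v L] by linarith
      then show ?thesis using \<open>pi_fin (vs n) = piL v L * Pk 1 (rix (vs n)) L (length (vs n))\<close> by simp
    qed
  qed
  ultimately show ?thesis by (rule Lim_transform_eventually)
qed

lemma X_close:
  assumes lw: "letterwise vs v" and kL: "k \<le> L" and L: "1 \<le> L" and N: "L \<le> N"
  shows "\<forall>\<^sub>F n in sequentially.
    \<bar>Pk k (rix (vs n)) L (length (vs n)) - Pk k v L N / (Pk 1 v L N) ^ k * (Pk 1 (rix (vs n)) L (length (vs n))) ^ k\<bar>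
      \<le> (real k)^2 / real N"
  using letterwise_ev[OF lw, of N]
proof (rule eventually_mono)
  fix n assume h: "N \<le> length (vs n) \<and> (\<forall>i<N. rev (vs n) ! i = v i)"
  define a where "a = rix (vs n)"
  define M where "M = length (vs n)"
  have NM: "N \<le> M" using h by (simp add: M_def)
  have ag: "\<And>i. i < N \<Longrightarrow> a i = v i" using h by (simp add: a_def rix_def)
  have c1: "Pk k a L N = Pk k v L N" "Pk 1 a L N = Pk 1 v L N"
    by (rule Pk_cong, simp add: ag)+
  have p1: "0 < Pk 1 v L N" using Pk1_pos L by simp
  have pb: "0 \<le> Pk k v L N" "Pk k v L N \<le> 1" using Pk_bounds[of k L v N] kL by auto
  have sx: "Pk k a L M = Pk k v L N * Pk k a N M" using Pk_split[OF N NM] c1 by simp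
  have sy: "(Pk 1 a L M) ^ k = (Pk 1 v L N) ^ k * (Pk 1 a N M) ^ k"
    using Pk_split[OF N NM, of 1 a] c1 by (simp add: power_mult_distrib)
  have "Pk k a L M - Pk k v L N / (Pk 1 v L N) ^ k * (Pk 1 a L M) ^ k
      = Pk k v L N * (Pk k a N M - (Pk 1 a N M) ^ k)"
    unfolding sx sy using p1 by (simp add: field_simps)
  then have "\<bar>Pk k a L M - Pk k v L N / (Pk 1 v L N) ^ k * (Pk 1 a L M) ^ k\<bar>
      = Pk k v L N * \<bar>Pk k a N M - (Pk 1 a N M) ^ k\<bar>" using pb by (simp add: abs_mult)
  also have "\<dots> \<le> 1 * ((real k)^2 / real N)"
    using pb Pk_diff[of N k a M] L N kL by (intro mult_mono) auto
  finally show "\<bar>Pk k (rix (vs n)) L (length (vs n)) - Pk k v L N / (Pk 1 v L N) ^ k * (Pk 1 (rix (vs n)) L (length (vs n))) ^ k\<bar>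
      \<le> (real k)^2 / real N" by (simp add: a_def M_def)
qed

lemma a_bound:
  assumes "k \<le> L" "1 \<le> L" "L \<le> N"
  shows "\<bar>Pk k v L N / (Pk 1 v L N) ^ k\<bar> \<le> 1"
proof -
  have p1: "0 < Pk 1 v L N" using Pk1_pos assms by simp
  have pb: "0 \<le> Pk k v L N" "Pk k v L N \<le> (Pk 1 v L N) ^ k" using Pk_bounds[of k L v N] assms by auto
  have "0 < (Pk 1 v L N) ^ k" using p1 by simp
  then show ?thesis using pb by (simp add: abs_le_iff field_simps)
qed

lemma X_conv:
  assumes lw: "letterwise vs v" and lw': "letterwise vs' v" and kL: "k \<le> L" and L: "1 \<le> L"
    and pc: "(\<lambda>n. pi_fin (vs n)) \<longlonglongrightarrow> c" and pc': "(\<lambda>n. pi_fin (vs' n)) \<longlonglongrightarrow> c"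
  shows "\<exists>l. (\<lambda>n. Pk k (rix (vs n)) L (length (vs n))) \<longlonglongrightarrow> l \<and>
             (\<lambda>n. Pk k (rix (vs' n)) L (length (vs' n))) \<longlonglongrightarrow> l"
proof (rule common_limit[OF y_lim[OF lw L pc, of k] y_lim[OF lw' L pc', of k]])
  fix e :: real assume e: "0 < e"
  define N where "N = max L (nat \<lceil>(real k)^2 / e\<rceil>)"
  have LN: "L \<le> N" by (simp add: N_def)
  have Np: "0 < real N" using LN L by simp
  have "(real k)^2 / e \<le> real N" unfolding N_def by linarith
  then have kN: "(real k)^2 / real N \<le> e" using e Np by (simp add: field_simps)
  show "\<exists>a. \<bar>a\<bar> \<le> 1 \<and> (\<forall>\<^sub>F n in sequentially.
      \<bar>Pk k (rix (vs n)) L (length (vs n)) - a * Pk 1 (rix (vs n)) L (length (vs n)) ^ k\<bar> \<le> e \<and>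
      \<bar>Pk k (rix (vs' n)) L (length (vs' n)) - a * Pk 1 (rix (vs' n)) L (length (vs' n)) ^ k\<bar> \<le> e)"
  proof (intro exI conjI)
    show "\<bar>Pk k v L N / (Pk 1 v L N) ^ k\<bar> \<le> 1" using a_bound kL L LN by blast
    show "\<forall>\<^sub>F n in sequentially.
      \<bar>Pk k (rix (vs n)) L (length (vs n)) - Pk k v L N / (Pk 1 v L N) ^ k * Pk 1 (rix (vs n)) L (length (vs n)) ^ k\<bar> \<le> e \<and>
      \<bar>Pk k (rix (vs' n)) L (length (vs' n)) - Pk k v L N / (Pk 1 v L N) ^ k * Pk 1 (rix (vs' n)) L (length (vs' n)) ^ k\<bar> \<le> e"
      using eventually_conj[OF X_close[OF lw kL L LN] X_close[OF lw' kL L LN]]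
      by eventually_elim (use kN in linarith)
  qed
qed



lemma sfun_simps[simp]: "sfun [] = []" "sfun (One i # z) = One 1 # sfun z" "sfun (Two # z) = Two # sfun z"
  by (simp_all add: sfun_def)

lemma wt_sfun: "wt (sfun z) = wt z"
proof (induction z)
  case (Cons b z) then show ?case by (cases b) auto
qed simp

lemma ones_simps[simp]: "ones [] = 0" "ones (One i # z) = Suc (ones z)" "ones (Two # z) = ones z"
  by (simp_all add: ones_def)

lemma kap_One: "1 \<le> r \<Longrightarrow> kap r (One i # z) = 1 / real r"
  using D_pos[of r z] by (simp add: kap_def D_One)

lemma kap_Two: "1 \<le> r \<Longrightarrow> kap r (Two # z) = real (wt z) + 1"
  using D_pos[of r z] by (simp add: kap_def D_Two)

lemma Ev0:
  assumes r: "1 \<le> r" and p: "psi [] = 1"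
  shows "vertex r w \<Longrightarrow> Ev psi (kap r) w 0 = real (dcount 1 [] (sfun w))^2 / (fact (wt w) * real r ^ ones w)"
proof (induction w)
  case Nil then show ?case using p by simp
next
  case (Cons b z)
  define E where "E = Ev psi (kap r)"
  define Dz where "Dz = real (dcount 1 [] (sfun z))"
  have IH: "E z 0 = Dz^2 / (fact (wt z) * real r ^ ones z)" using Cons by (simp add: E_def Dz_def)
  have eig: "real (wt (b # z)) * E (b # z) 0 = kap r (b # z) * E z 0"
    using Ev_eig[of "kap r" "b # z" 0, OF kap_Nil] by (simp add: E_def)
  have rp: "0 < real r" using r by simp
  have fp: "0 < (fact (wt z) :: real)" by simp
  show ?case
  proof (cases b)
    case (One i)
    have d1: "real (dcount 1 [] (sfun (b # z))) = Dz" using One by (simp add: D_One Dz_def)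
    have h: "real (Suc (wt z)) * E (b # z) 0 = 1 / real r * E z 0" using eig One kap_One[OF r] by simp
    have sp: "real (Suc (wt z)) \<noteq> 0" by simp
    have "E (b # z) 0 = (real (Suc (wt z)) * E (b # z) 0) / real (Suc (wt z))" using sp by simp
    also have "\<dots> = (1 / real r * E z 0) / real (Suc (wt z))" using h by simp
    finally have "E (b # z) 0 = E z 0 / (real r * real (Suc (wt z)))" by simp
    then show ?thesis using One IH d1 rp fp by (simp add: E_def[symmetric] field_simps fact_Suc)
  next
    case Two
    have d1: "real (dcount 1 [] (sfun (b # z))) = (real (wt z) + 1) * Dz"
      using Two D_Two[of 1 "sfun z"] by (simp add: Dz_def wt_sfun)
    have "real (Suc (Suc (wt z))) * E (b # z) 0 = (real (wt z) + 1) * E z 0" using eig Two kap_Two[OF r] by simp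
    then have "E (b # z) 0 = (real (wt z) + 1) * E z 0 / (real (wt z) + 2)" by (simp add: field_simps)
    have gen: "p * (D^2 / F) / q = (p * D)^2 / (q * p * F)" if "0 < p" "0 < q" "0 < F" for p q D F :: real
      using that by (simp add: field_simps power2_eq_square)
    have F: "0 < fact (wt z) * real r ^ ones z" using rp fp by simp
    have ff: "fact (wt (b # z)) = (real (wt z) + 2) * (real (wt z) + 1) * (fact (wt z) :: real)"
      using Two by (simp add: fact_Suc algebra_simps)
    have "E (b # z) 0 = (real (wt z) + 1) * (Dz^2 / (fact (wt z) * real r ^ ones z)) / (real (wt z) + 2)"
      using \<open>E (b # z) 0 = (real (wt z) + 1) * E z 0 / (real (wt z) + 2)\<close> IH by simp
    also have "\<dots> = ((real (wt z) + 1) * Dz)^2 / ((real (wt z) + 2) * (real (wt z) + 1) * (fact (wt z) * real r ^ ones z))"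
      by (rule gen) (use F in auto)
    also have "\<dots> = real (dcount 1 [] (sfun (b # z)))^2 / (fact (wt (b # z)) * real r ^ ones (b # z))"
      unfolding d1 ff using Two by (simp add: mult.assoc)
    finally show ?thesis by (simp add: E_def)
  qed
qed

lemma part1:
  assumes r: "1 \<le> r" and w: "vertex r w"
    and lw: "letterwise vs v" and lw': "letterwise vs' v"
    and pc: "(\<lambda>n. pi_fin (vs n)) \<longlonglongrightarrow> c" and pc': "(\<lambda>n. pi_fin (vs' n)) \<longlonglongrightarrow> c"
  shows "\<exists>l. (\<lambda>n. ratio r w (vs n)) \<longlonglongrightarrow> l \<and> (\<lambda>n. ratio r w (vs' n)) \<longlonglongrightarrow> l"
proof -
  define L where "L = Suc (wt w)"
  define E where "E = Ev (\<lambda>y. ratio r y (tw v L)) (kap r) w"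
  have L1: "1 \<le> L" by (simp add: L_def)
  have "\<forall>k. \<exists>l. k \<le> wt w \<longrightarrow> ((\<lambda>n. Pk k (rix (vs n)) L (length (vs n))) \<longlonglongrightarrow> l \<and>
             (\<lambda>n. Pk k (rix (vs' n)) L (length (vs' n))) \<longlonglongrightarrow> l)"
  proof (intro allI)
    fix k
    show "\<exists>l. k \<le> wt w \<longrightarrow> ((\<lambda>n. Pk k (rix (vs n)) L (length (vs n))) \<longlonglongrightarrow> l \<and>
             (\<lambda>n. Pk k (rix (vs' n)) L (length (vs' n))) \<longlonglongrightarrow> l)"
    proof (cases "k \<le> wt w")
      case True
      then have "k \<le> L" by (simp add: L_def)
      then show ?thesis using X_conv[OF lw lw' _ L1 pc pc'] by blast
    qed simp
  qed
  then obtain lf where lf: "\<And>k. k \<le> wt w \<Longrightarrow> (\<lambda>n. Pk k (rix (vs n)) L (length (vs n))) \<longlonglongrightarrow> lf k \<and>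
             (\<lambda>n. Pk k (rix (vs' n)) L (length (vs' n))) \<longlonglongrightarrow> lf k" by metis
  have conv: "(\<lambda>n. ratio r w (us n)) \<longlonglongrightarrow> (\<Sum>k\<le>wt w. lf k * E k)"
    if lwu: "letterwise us v" and lim: "\<And>k. k \<le> wt w \<Longrightarrow> (\<lambda>n. Pk k (rix (us n)) L (length (us n))) \<longlonglongrightarrow> lf k"
    for us
  proof -
    have "(\<lambda>n. \<Sum>k\<le>wt w. Pk k (rix (us n)) L (length (us n)) * E k) \<longlonglongrightarrow> (\<Sum>k\<le>wt w. lf k * E k)"
      by (intro tendsto_sum tendsto_mult_right lim) simp
    moreover have "\<forall>\<^sub>F n in sequentially. (\<Sum>k\<le>wt w. Pk k (rix (us n)) L (length (us n)) * E k) = ratio r w (us n)"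
      using letterwise_ev[OF lwu, of L]
    proof (rule eventually_mono)
      fix n assume "L \<le> length (us n) \<and> (\<forall>i<L. rev (us n) ! i = v i)"
      then show "(\<Sum>k\<le>wt w. Pk k (rix (us n)) L (length (us n)) * E k) = ratio r w (us n)"
        using ratio_repr[OF r w, of L "us n" v] by (simp add: L_def E_def)
    qed
    ultimately show ?thesis by (rule Lim_transform_eventually)
  qed
  show ?thesis using conv[OF lw] conv[OF lw'] lf by blast
qed

lemma part2:
  assumes r: "1 \<le> r" and w: "vertex r w"
    and lw: "letterwise vs v" and pc: "(\<lambda>n. pi_fin (vs n)) \<longlonglongrightarrow> 0"
  shows "(\<lambda>n. ratio r w (vs n)) \<longlonglongrightarrow> real (dcount 1 [] (sfun w)) ^ 2 / (fact (wt w) * real r ^ ones w)"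
proof -
  define L where "L = Suc (wt w)"
  define psi where "psi = (\<lambda>y. ratio r y (tw v L))"
  define E where "E = Ev psi (kap r) w"
  have L1: "1 \<le> L" by (simp add: L_def)
  have lim: "(\<lambda>n. Pk k (rix (vs n)) L (length (vs n))) \<longlonglongrightarrow> (if k = 0 then 1 else 0)" if k: "k \<le> wt w" for k
  proof (cases "k = 0")
    case True then show ?thesis by (simp add: Pk_zero)
  next
    case False
    have kL: "k \<le> L" using k by (simp add: L_def)
    have z: "(0 / piL v L) ^ k = (0::real)" using False by simp
    have y: "(\<lambda>n. (Pk 1 (rix (vs n)) L (length (vs n))) ^ k) \<longlonglongrightarrow> 0"
      using y_lim[OF lw L1 pc, of k] unfolding z .
    have "(\<lambda>n. Pk k (rix (vs n)) L (length (vs n))) \<longlonglongrightarrow> 0"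
    proof (rule tendsto_sandwich[OF _ _ tendsto_const y])
      show "\<forall>\<^sub>F n in sequentially. 0 \<le> Pk k (rix (vs n)) L (length (vs n))"
        using Pk_bounds(1)[OF kL] by simp
      show "\<forall>\<^sub>F n in sequentially. Pk k (rix (vs n)) L (length (vs n)) \<le> (Pk 1 (rix (vs n)) L (length (vs n))) ^ k"
        using Pk_bounds(3)[OF kL] by simp
    qed
    then show ?thesis using False by simp
  qed
  have "(\<lambda>n. \<Sum>k\<le>wt w. Pk k (rix (vs n)) L (length (vs n)) * E k) \<longlonglongrightarrow> (\<Sum>k\<le>wt w. (if k = 0 then 1 else 0) * E k)"
    by (intro tendsto_sum tendsto_mult_right lim) simp
  moreover have "(\<Sum>k\<le>wt w. (if k = 0 then 1 else 0) * E k) = E 0"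
  proof -
    have "(\<Sum>k\<le>wt w. (if k = 0 then 1 else 0) * E k) = (\<Sum>k\<le>wt w. if k = 0 then E k else 0)"
      by (intro sum.cong) auto
    also have "\<dots> = E 0" by (simp add: sum.delta)
    finally show ?thesis .
  qed
  moreover have "psi [] = 1"
  proof -
    have "0 < dcount r [] (tw v L)" using D_pos[OF r] .
    then show ?thesis by (simp add: psi_def ratio_def)
  qed
  then have "E 0 = real (dcount 1 [] (sfun w)) ^ 2 / (fact (wt w) * real r ^ ones w)"
    using Ev0[OF r _ w] by (simp add: E_def)
  moreover have "\<forall>\<^sub>F n in sequentially. (\<Sum>k\<le>wt w. Pk k (rix (vs n)) L (length (vs n)) * E k) = ratio r w (vs n)"
    using letterwise_ev[OF lw, of L]
  proof (rule eventually_mono)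
    fix n assume "L \<le> length (vs n) \<and> (\<forall>i<L. rev (vs n) ! i = v i)"
    then show "(\<Sum>k\<le>wt w. Pk k (rix (vs n)) L (length (vs n)) * E k) = ratio r w (vs n)"
      using ratio_repr[OF r w, of L "vs n" v] by (simp add: L_def E_def psi_def)
  qed
  ultimately show ?thesis using Lim_transform_eventually by fastforce
qed

theorem mainTheorem1:
  fixes r :: nat
  assumes "1 \<le> r"
  shows "(\<forall>(vs :: nat \<Rightarrow> word) vs' (v :: iword) (\<beta> :: real).
            (\<forall>n. vertex r (vs n)) \<and> (\<forall>n. vertex r (vs' n)) \<and>
            ivertex r v \<and> pi_inf v > 0 \<and> 0 < \<beta> \<and> \<beta> \<le> 1 \<and>
            letterwise vs v \<and> letterwise vs' v \<and>
            (\<lambda>n. pi_fin (vs n)) \<longlonglongrightarrow> \<beta> * pi_inf v \<and>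
            (\<lambda>n. pi_fin (vs' n)) \<longlonglongrightarrow> \<beta> * pi_inf v
          \<longrightarrow> (\<forall>w. vertex r w \<longrightarrow>
                (\<exists>L. (\<lambda>n. ratio r w (vs n)) \<longlonglongrightarrow> L \<and>
                     (\<lambda>n. ratio r w (vs' n)) \<longlonglongrightarrow> L)))
       \<and> (\<forall>(vs :: nat \<Rightarrow> word) (v :: iword).
            (\<forall>n. vertex r (vs n)) \<and> ivertex r v \<and> letterwise vs v \<and>
            (\<lambda>n. pi_fin (vs n)) \<longlonglongrightarrow> 0
          \<longrightarrow> (\<forall>w. vertex r w \<longrightarrow>
                (\<lambda>n. ratio r w (vs n)) \<longlonglongrightarrow>
                  real (dcount 1 [] (sfun w)) ^ 2 / (fact (wt w) * real r ^ ones w)))"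
  using part1[OF assms] part2[OF assms] by blast

end
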